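(* Let $n\in\mathbb{N}$, set $p_{2n}=\frac12\left(1-\tan^2\left(\frac{\pi}{4n}\right)\right)$ and $H=K_{2n}$. Then for all $p\in[p_{2n},1]$, \[\min\left\{\mathbb{P}\left[|C_1(\mathbf{H}_\mu)|>n\right]:\ \mu\in\mathcal{M}_{1,\geq p}(K_{2n})\right\}=1-\binom{2n}{n}\left(\frac{1-p}{2}\right)^n.\]
   Context: $K_{2n}$ is the complete graph on $2n$ vertices. A random graph model on $H$ is a probability measure $\mu$ on subsets of $E(H)$, and $\mathbf{H}_\mu$ is the random spanning subgraph of $H$ with edge set distributed according to $\mu$. $\mu$ is $1$-independent if for all sets $A,B\subseteq E(H)$ whose edges span disjoint vertex sets, $E(\mathbf{H}_\mu)\cap A$ and $E(\mathbf{H}_\mu)\cap B$ are independent. $\mathcal{M}_{1,\geq p}(H)$ is the set of $1$-independent measures on $H$ in which each edge is present with probability at least $p$. $C_1(F)$ denotes a largest connected component of the spanning subgraph $(V(H),F)$, and $|C_1|$ its number of vertices. *)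

theory Defs
  imports "HOL-Probability.Probability"
begin

definition Kverts :: "nat \<Rightarrow> nat set" where
  "Kverts n = {0..<2*n}"

definition complete_edges :: "'a set \<Rightarrow> 'a set set" where
  "complete_edges V = {e. \<exists>u v. u \<in> V \<and> v \<in> V \<and> u \<noteq> v \<and> e = {u, v}}"

definition random_graph_model :: "'a set set \<Rightarrow> 'a set set pmf \<Rightarrow> bool" where
  "random_graph_model E \<mu> \<longleftrightarrow> set_pmf \<mu> \<subseteq> Pow E"

definition one_independent :: "'a set set \<Rightarrow> 'a set set pmf \<Rightarrow> bool" where
  "one_independent E \<mu> \<longleftrightarrow>
     (\<forall>A B. A \<subseteq> E \<longrightarrow> B \<subseteq> E \<longrightarrow> \<Union>A \<inter> \<Union>B = {} \<longrightarrow>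
        (\<forall>X Y. measure_pmf.prob \<mu> {F. F \<inter> A = X \<and> F \<inter> B = Y}
               = measure_pmf.prob \<mu> {F. F \<inter> A = X} * measure_pmf.prob \<mu> {F. F \<inter> B = Y}))"

definition M1_ge :: "real \<Rightarrow> 'a set set \<Rightarrow> 'a set set pmf set" where
  "M1_ge p E = {\<mu>. random_graph_model E \<mu> \<and> one_independent E \<mu> \<and>
                   (\<forall>e\<in>E. measure_pmf.prob \<mu> {F. e \<in> F} \<ge> p)}"

definition component :: "'a set \<Rightarrow> 'a set set \<Rightarrow> 'a \<Rightarrow> 'a set" where
  "component V F v = {w \<in> V. (v, w) \<in> {(x, y). {x, y} \<in> F}\<^sup>*}"

definition largest_comp_size :: "'a set \<Rightarrow> 'a set set \<Rightarrow> nat" where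
  "largest_comp_size V F = Max ((\<lambda>v. card (component V F v)) ` V)"

end

theory Submission
  imports Defs
begin

lemma prob_as_sum:
  assumes "finite U" "set_pmf \<mu> \<subseteq> U"
  shows "measure_pmf.prob \<mu> Q = (\<Sum>F\<in>U \<inter> Q. pmf \<mu> F)"
proof -
  have "measure_pmf.prob \<mu> (U \<inter> Q) = measure_pmf.prob \<mu> Q"
    by (metis assms(2) inf.absorb_iff2 inf_assoc inf_commute measure_Int_set_pmf)
  moreover have "measure_pmf.prob \<mu> (U \<inter> Q) = (\<Sum>F\<in>U \<inter> Q. pmf \<mu> F)"
    using assms(1) by (simp add: measure_measure_pmf_finite)
  ultimately show ?thesis by simp
qed

lemma sum_group_prob:
  assumes "finite U" "set_pmf \<mu> \<subseteq> U" "finite K" "key ` U \<subseteq> K"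
  shows "(\<Sum>F\<in>U. pmf \<mu> F * f (key F)) = (\<Sum>k\<in>K. f k * measure_pmf.prob \<mu> {F. key F = k})"
proof -
  have "(\<Sum>k\<in>K. f k * measure_pmf.prob \<mu> {F. key F = k})
      = (\<Sum>k\<in>K. \<Sum>F\<in>{F\<in>U. key F = k}. pmf \<mu> F * f (key F))"
  proof (rule sum.cong[OF refl])
    fix k assume "k \<in> K"
    have "measure_pmf.prob \<mu> {F. key F = k} = (\<Sum>F\<in>{F\<in>U. key F = k}. pmf \<mu> F)"
      using prob_as_sum[OF assms(1,2), of "{F. key F = k}"]
      by (simp add: Int_def)
    then show "f k * measure_pmf.prob \<mu> {F. key F = k} = (\<Sum>F\<in>{F\<in>U. key F = k}. pmf \<mu> F * f (key F))"
      by (simp add: sum_distrib_left mult.commute)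
  qed
  also have "\<dots> = (\<Sum>F\<in>U. pmf \<mu> F * f (key F))"
    by (rule sum.group[OF assms(1,3,4)])
  finally show ?thesis by simp
qed

lemma indep_sum:
  assumes fin: "finite E" and supp: "set_pmf \<mu> \<subseteq> Pow E" and ind: "one_independent E \<mu>"
    and AB: "A \<subseteq> E" "B \<subseteq> E" "\<Union>A \<inter> \<Union>B = {}"
  shows "(\<Sum>F\<in>Pow E. pmf \<mu> F * (\<phi> (F \<inter> A) * \<psi> (F \<inter> B))) =
         (\<Sum>F\<in>Pow E. pmf \<mu> F * \<phi> (F \<inter> A)) * (\<Sum>F\<in>Pow E. pmf \<mu> F * \<psi> (F \<inter> B))"
proof -
  have fA: "finite (Pow A)" "finite (Pow B)" using fin AB finite_subset by auto
  have fE: "finite (Pow E)" using fin by simp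
  have imgA: "(\<lambda>F. F\<inter>A) ` Pow E \<subseteq> Pow A" "(\<lambda>F. F\<inter>B) ` Pow E \<subseteq> Pow B" by blast+
  have "(\<Sum>F\<in>Pow E. pmf \<mu> F * (\<phi> (F \<inter> A) * \<psi> (F \<inter> B))) =
    (\<Sum>k\<in>Pow A \<times> Pow B. (\<phi> (fst k) * \<psi> (snd k)) * measure_pmf.prob \<mu> {F. (F\<inter>A, F\<inter>B) = k})"
    using sum_group_prob[OF fE supp, of "Pow A \<times> Pow B" "\<lambda>F. (F\<inter>A, F\<inter>B)" "\<lambda>k. \<phi> (fst k) * \<psi> (snd k)"] fA
    by auto
  also have "\<dots> = (\<Sum>X\<in>Pow A. \<Sum>Y\<in>Pow B. (\<phi> X * measure_pmf.prob \<mu> {F. F\<inter>A = X}) * (\<psi> Y * measure_pmf.prob \<mu> {F. F\<inter>B = Y}))"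
    unfolding sum.cartesian_product
    using ind AB unfolding one_independent_def by (auto intro!: sum.cong simp: mult_ac)
  also have "\<dots> = (\<Sum>X\<in>Pow A. \<phi> X * measure_pmf.prob \<mu> {F. F\<inter>A = X}) * (\<Sum>Y\<in>Pow B. \<psi> Y * measure_pmf.prob \<mu> {F. F\<inter>B = Y})"
    by (rule sum_product[symmetric])
  also have "(\<Sum>X\<in>Pow A. \<phi> X * measure_pmf.prob \<mu> {F. F\<inter>A = X}) = (\<Sum>F\<in>Pow E. pmf \<mu> F * \<phi> (F \<inter> A))"
    using sum_group_prob[OF fE supp fA(1) imgA(1), of \<phi>] by simp
  also have "(\<Sum>Y\<in>Pow B. \<psi> Y * measure_pmf.prob \<mu> {F. F\<inter>B = Y}) = (\<Sum>F\<in>Pow E. pmf \<mu> F * \<psi> (F \<inter> B))"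
    using sum_group_prob[OF fE supp fA(2) imgA(2), of \<psi>] by simp
  finally show ?thesis .
qed

fun cnt :: "(nat \<Rightarrow> nat \<Rightarrow> bool) \<Rightarrow> nat \<Rightarrow> nat set \<Rightarrow> real" where
  "cnt R 0 S = 1"
| "cnt R (Suc k) S = (\<Sum>u\<in>S - {Min S}. if R (Min S) u then cnt R k (S - {Min S, u}) else 0)"

lemma cnt_nonneg: "cnt R k S \<ge> 0"
proof (induction k arbitrary: S)
  case (Suc k) then show ?case by (simp add: sum_nonneg)
qed simp

lemma cnt_cong:
  "finite S \<Longrightarrow> (\<forall>u\<in>S. \<forall>v\<in>S. R u v = R' u v) \<Longrightarrow> cnt R k S = cnt R' k S"
proof (induction k arbitrary: S)
  case 0 then show ?case by simp
next
  case (Suc k)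
  show ?case
  proof (cases "S = {}")
    case True then show ?thesis by simp
  next
    case False
    then have m: "Min S \<in> S" using Suc.prems(1) by simp
    show ?thesis unfolding cnt.simps
    proof (rule sum.cong[OF refl])
      fix u assume u: "u \<in> S - {Min S}"
      have "cnt R k (S - {Min S, u}) = cnt R' k (S - {Min S, u})"
        by (rule Suc.IH) (use Suc.prems in auto)
      then show "(if R (Min S) u then cnt R k (S - {Min S, u}) else 0) =
                 (if R' (Min S) u then cnt R' k (S - {Min S, u}) else 0)"
        using Suc.prems(2) m u by auto
    qed
  qed
qed

lemma cnt_lower:
  fixes cls :: "nat \<Rightarrow> 'b"
  assumes "finite S" "card S = 2*k"
    and "\<forall>x\<in>S. card {y\<in>S. cls y = cls x} \<le> k"
    and "\<forall>u\<in>S. \<forall>v\<in>S. cls u \<noteq> cls v \<longrightarrow> R u v"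
  shows "cnt R k S \<ge> fact k"
  using assms
proof (induction k arbitrary: S)
  case 0 then show ?case by simp
next
  case (Suc k)
  define v where "v = Min S"
  have fS: "finite S" using Suc.prems by simp
  have "S \<noteq> {}" using Suc.prems by auto
  hence vS: "v \<in> S" using fS v_def by simp
  define cl where "cl x = {y\<in>S. cls y = cls x}" for x
  have clS: "cl x \<subseteq> S" for x by (auto simp: cl_def)
  have fcl: "finite (cl x)" for x using clS fS finite_subset by blast
  have clk: "x \<in> S \<Longrightarrow> card (cl x) \<le> Suc k" for x using Suc.prems(3) by (simp add: cl_def)
  obtain G where G: "G \<subseteq> S - {v}" "card G \<ge> Suc k" "\<forall>u\<in>G. cls u \<noteq> cls v"
     "\<forall>u\<in>G. \<forall>x\<in>S - {v,u}. card {y\<in>S - {v,u}. cls y = cls x} \<le> k"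
  proof (cases "\<exists>x\<in>S. card (cl x) = Suc k \<and> cls x \<noteq> cls v")
    case True
    then obtain x where x: "x\<in>S" "card (cl x) = Suc k" "cls x \<noteq> cls v" by auto
    show ?thesis
    proof (rule that[of "cl x"])
      show "cl x \<subseteq> S - {v}" using x by (auto simp: cl_def)
      show "card (cl x) \<ge> Suc k" using x by simp
      show "\<forall>u\<in>cl x. cls u \<noteq> cls v" using x by (auto simp: cl_def)
      show "\<forall>u\<in>cl x. \<forall>z\<in>S - {v,u}. card {y\<in>S - {v,u}. cls y = cls z} \<le> k"
      proof (intro ballI)
        fix u z assume u: "u \<in> cl x" and z: "z \<in> S - {v,u}"
        show "card {y\<in>S - {v,u}. cls y = cls z} \<le> k"
        proof (cases "cls z = cls x")
          case True
          have "{y\<in>S - {v,u}. cls y = cls z} \<subseteq> cl x - {u}" using True by (auto simp: cl_def)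
          moreover have "card (cl x - {u}) = k" using u x fcl by simp
          ultimately show ?thesis using fcl by (metis card_mono finite_Diff)
        next
          case False
          have sub: "{y\<in>S - {v,u}. cls y = cls z} \<subseteq> (S - cl x) - {v}"
            using False by (auto simp: cl_def)
          have "card (S - cl x) = Suc k" using card_Diff_subset[OF fcl clS, of x] x Suc.prems(2) by simp
          moreover have "v \<in> S - cl x" using vS x by (auto simp: cl_def)
          ultimately have "card ((S - cl x) - {v}) = k" using fS by simp
          then show ?thesis using sub fS by (metis card_mono finite_Diff)
        qed
      qed
    qed
  next
    case False
    show ?thesis
    proof (rule that[of "{u\<in>S. cls u \<noteq> cls v}"])
      show "{u\<in>S. cls u \<noteq> cls v} \<subseteq> S - {v}" by auto
      have "{u\<in>S. cls u \<noteq> cls v} = S - cl v" by (auto simp: cl_def)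
      then have "card {u\<in>S. cls u \<noteq> cls v} = card S - card (cl v)"
        using card_Diff_subset[OF fcl clS, of v] by simp
      then show "card {u\<in>S. cls u \<noteq> cls v} \<ge> Suc k" using clk[OF vS] Suc.prems(2) by simp
      show "\<forall>u\<in>{u\<in>S. cls u \<noteq> cls v}. cls u \<noteq> cls v" by simp
      show "\<forall>u\<in>{u\<in>S. cls u \<noteq> cls v}. \<forall>z\<in>S - {v,u}. card {y\<in>S - {v,u}. cls y = cls z} \<le> k"
      proof (intro ballI)
        fix u z assume u: "u \<in> {u\<in>S. cls u \<noteq> cls v}" and z: "z \<in> S - {v,u}"
        have sub0: "{y\<in>S - {v,u}. cls y = cls z} \<subseteq> cl z" by (auto simp: cl_def)
        show "card {y\<in>S - {v,u}. cls y = cls z} \<le> k"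
        proof (cases "card (cl z) \<le> k")
          case True then show ?thesis using sub0 fcl by (meson card_mono le_trans)
        next
          case nk: False
          then have "card (cl z) = Suc k" using clk z by force
          then have "cls z = cls v" using False z by auto
          then have sub: "{y\<in>S - {v,u}. cls y = cls z} \<subseteq> cl z - {v}" by (auto simp: cl_def)
          have "v \<in> cl z" using vS \<open>cls z = cls v\<close> by (auto simp: cl_def)
          then have "card (cl z - {v}) = k" using \<open>card (cl z) = Suc k\<close> fcl by simp
          then show ?thesis using sub fcl by (metis card_mono finite_Diff)
        qed
      qed
    qed
  qed
  have R: "R v u" if "u \<in> G" for u
  proof -
    have "u \<in> S" "cls v \<noteq> cls u" using G that by auto
    then show ?thesis using vS Suc.prems(4) by blast
  qed
  have IH: "cnt R k (S - {v, u}) \<ge> fact k" if "u \<in> G" for u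
  proof (rule Suc.IH)
    show "finite (S - {v,u})" using fS by simp
    have "u \<in> S" "u \<noteq> v" using G that by auto
    then show "card (S - {v,u}) = 2 * k" using Suc.prems(2) vS fS
      by (simp add: card_Diff_subset)
    show "\<forall>x\<in>S - {v, u}. card {y \<in> S - {v, u}. cls y = cls x} \<le> k" using G that by blast
    show "\<forall>a\<in>S - {v, u}. \<forall>b\<in>S - {v, u}. cls a \<noteq> cls b \<longrightarrow> R a b" using Suc.prems(4) by blast
  qed
  have fG: "finite G" using G fS finite_subset by blast
  have "real (Suc k) * fact k \<le> real (card G) * fact k" using G(2) by (simp add: mult_right_mono)
  also have "\<dots> = (\<Sum>u\<in>G. fact k)" by simp
  also have "\<dots> \<le> (\<Sum>u\<in>G. if R v u then cnt R k (S - {v, u}) else 0)"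
    by (rule sum_mono) (use R IH in auto)
  also have "\<dots> \<le> (\<Sum>u\<in>S - {v}. if R v u then cnt R k (S - {v, u}) else 0)"
    by (rule sum_mono2) (use fS G in \<open>auto simp: cnt_nonneg\<close>)
  finally have "real (Suc k) * fact k \<le> (\<Sum>u\<in>S - {v}. if R v u then cnt R k (S - {v, u}) else 0)" .
  moreover have "cnt R (Suc k) S = (\<Sum>u\<in>S - {v}. if R v u then cnt R k (S - {v, u}) else 0)"
    unfolding v_def by simp
  ultimately show ?case by simp
qed

fun dfact :: "nat \<Rightarrow> real" where
  "dfact 0 = 1"
| "dfact (Suc k) = (2 * real k + 1) * dfact k"

lemma dfact_nonneg: "dfact k \<ge> 0"
  by (induction k) auto

lemma singleton_notin_complete_edges: "{a} \<notin> complete_edges V"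
  unfolding complete_edges_def by (auto simp: doubleton_eq_iff)

lemma doubleton_in_complete_edges: "a \<in> V \<Longrightarrow> b \<in> V \<Longrightarrow> a \<noteq> b \<Longrightarrow> {a,b} \<in> complete_edges V"
  unfolding complete_edges_def by blast

lemma complete_edges_mono: "S \<subseteq> V \<Longrightarrow> complete_edges S \<subseteq> complete_edges V"
  unfolding complete_edges_def by blast

lemma Union_complete_edges: "\<Union>(complete_edges S) \<subseteq> S"
  unfolding complete_edges_def by blast

lemma finite_complete_edges: "finite V \<Longrightarrow> finite (complete_edges V)"
proof -
  assume "finite V"
  moreover have "complete_edges V \<subseteq> Pow V" unfolding complete_edges_def by blast
  ultimately show ?thesis by (meson finite_Pow_iff finite_subset)
qed

lemma cnt_expect:
  assumes fin: "finite V" and Edef: "E = complete_edges V"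
   and supp: "set_pmf \<mu> \<subseteq> Pow E" and ind: "one_independent E \<mu>"
   and pe: "\<forall>e\<in>E. measure_pmf.prob \<mu> {F. e \<in> F} \<ge> p"
  shows "S \<subseteq> V \<Longrightarrow> card S = 2*k \<Longrightarrow>
    (\<Sum>F\<in>Pow E. pmf \<mu> F * cnt (\<lambda>u v. {u,v} \<notin> F) k S) \<le> dfact k * (1-p)^k"
proof (induction k arbitrary: S)
  case 0
  have fE: "finite E" using fin Edef finite_complete_edges by simp
  have "(\<Sum>F\<in>Pow E. pmf \<mu> F) = measure_pmf.prob \<mu> UNIV"
    using prob_as_sum[OF _ supp, of UNIV] fE by simp
  then show ?case by simp
next
  case (Suc k)
  have fE: "finite E" using fin Edef finite_complete_edges by simp
  have fS: "finite S" using Suc.prems fin finite_subset by blast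
  have "S \<noteq> {}" using Suc.prems by auto
  define v where "v = Min S"
  have vS: "v \<in> S" using fS \<open>S \<noteq> {}\<close> v_def by simp
  have step: "(\<Sum>F\<in>Pow E. pmf \<mu> F * (if {v,u} \<notin> F then cnt (\<lambda>a b. {a,b} \<notin> F) k (S - {v,u}) else 0))
      \<le> (1 - p) * (dfact k * (1-p)^k)" if u: "u \<in> S - {v}" for u
  proof -
    define e where "e = {v,u}"
    define S' where "S' = S - {v,u}"
    define B where "B = complete_edges S'"
    have eE: "e \<in> E" unfolding e_def Edef
      by (rule doubleton_in_complete_edges) (use u vS Suc.prems(1) in auto)
    have BE: "B \<subseteq> E" unfolding B_def Edef
      by (rule complete_edges_mono) (use Suc.prems(1) S'_def in auto)
    have "\<Union>B \<subseteq> S'" using Union_complete_edges B_def by simp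
    then have disj: "\<Union>{e} \<inter> \<Union>B = {}" by (auto simp: e_def S'_def)
    have fS': "finite S'" using fS S'_def by simp
    have cc: "cnt (\<lambda>a b. {a,b} \<notin> F) k S' = cnt (\<lambda>a b. {a,b} \<notin> F \<inter> B) k S'" if F: "F \<in> Pow E" for F
      proof (rule cnt_cong[OF fS'], intro ballI)
        fix a b assume ab: "a \<in> S'" "b \<in> S'"
        show "({a,b} \<notin> F) = ({a,b} \<notin> F \<inter> B)"
        proof (cases "a = b")
          case True
          then show ?thesis using F Edef singleton_notin_complete_edges[of a V] by auto
        next
          case False
          then show ?thesis using ab B_def doubleton_in_complete_edges[of a S' b] by auto
        qed
      qed
    have eq: "(if {v,u} \<notin> F then cnt (\<lambda>a b. {a,b} \<notin> F) k (S - {v,u}) else 0)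
       = (if F \<inter> {e} = {} then 1 else 0) * cnt (\<lambda>a b. {a,b} \<notin> F \<inter> B) k S'" if F: "F \<in> Pow E" for F
    proof -
      have "cnt (\<lambda>a b. {a,b} \<notin> F) k S' = cnt (\<lambda>a b. {a,b} \<notin> F \<inter> B) k S'"
      proof (rule cnt_cong[OF fS'], intro ballI)
        fix a b assume ab: "a \<in> S'" "b \<in> S'"
        show "({a,b} \<notin> F) = ({a,b} \<notin> F \<inter> B)"
        proof (cases "a = b")
          case True
          then show ?thesis using F Edef singleton_notin_complete_edges[of a V] by auto
        next
          case False
          then show ?thesis using ab B_def doubleton_in_complete_edges[of a S' b] by auto
        qed
      qed
      then show ?thesis by (simp add: e_def S'_def)
    qed
    have "(\<Sum>F\<in>Pow E. pmf \<mu> F * (if {v,u} \<notin> F then cnt (\<lambda>a b. {a,b} \<notin> F) k (S - {v,u}) else 0))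
       = (\<Sum>F\<in>Pow E. pmf \<mu> F * ((\<lambda>X. if X = {} then 1 else 0) (F \<inter> {e}) * (\<lambda>Y. cnt (\<lambda>a b. {a,b} \<notin> Y) k S') (F \<inter> B)))"
      using eq by (intro sum.cong) auto
    also have "\<dots> = (\<Sum>F\<in>Pow E. pmf \<mu> F * (if F \<inter> {e} = {} then 1 else 0)) *
                     (\<Sum>F\<in>Pow E. pmf \<mu> F * cnt (\<lambda>a b. {a,b} \<notin> F \<inter> B) k S')"
      by (rule indep_sum[OF fE supp ind _ BE disj]) (use eE in simp)
    also have "(\<Sum>F\<in>Pow E. pmf \<mu> F * cnt (\<lambda>a b. {a,b} \<notin> F \<inter> B) k S') =
               (\<Sum>F\<in>Pow E. pmf \<mu> F * cnt (\<lambda>a b. {a,b} \<notin> F) k S')"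
      using cc by (intro sum.cong) auto
    finally have X: "(\<Sum>F\<in>Pow E. pmf \<mu> F * (if {v,u} \<notin> F then cnt (\<lambda>a b. {a,b} \<notin> F) k (S - {v,u}) else 0))
      = (\<Sum>F\<in>Pow E. pmf \<mu> F * (if F \<inter> {e} = {} then 1 else 0)) *
                     (\<Sum>F\<in>Pow E. pmf \<mu> F * cnt (\<lambda>a b. {a,b} \<notin> F) k S')" .
    have "(\<Sum>F\<in>Pow E. pmf \<mu> F * (if F \<inter> {e} = {} then 1 else 0)) = (\<Sum>F\<in>Pow E \<inter> {F. e \<notin> F}. pmf \<mu> F)"
      by (subst sum.inter_restrict) (auto simp: fE intro!: sum.cong)
    also have "\<dots> = measure_pmf.prob \<mu> {F. e \<notin> F}" using prob_as_sum[OF _ supp] fE by simp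
    also have "{F. e \<notin> F} = UNIV - {F. e \<in> F}" by auto
    also have "measure_pmf.prob \<mu> (UNIV - {F. e \<in> F}) = 1 - measure_pmf.prob \<mu> {F. e \<in> F}"
      using measure_pmf.prob_compl[of "{F. e \<in> F}" \<mu>] by simp
    finally have P0: "(\<Sum>F\<in>Pow E. pmf \<mu> F * (if F \<inter> {e} = {} then 1 else 0)) \<le> 1 - p"
      using pe eE by auto
    have P0nn: "(\<Sum>F\<in>Pow E. pmf \<mu> F * (if F \<inter> {e} = {} then 1 else 0)) \<ge> 0"
      by (intro sum_nonneg) auto
    have C: "(\<Sum>F\<in>Pow E. pmf \<mu> F * cnt (\<lambda>a b. {a,b} \<notin> F) k S') \<le> dfact k * (1-p)^k"
    proof (rule Suc.IH)
      show "S' \<subseteq> V" using Suc.prems S'_def by auto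
      have "u \<in> S" "u \<noteq> v" using u by auto
      then show "card S' = 2 * k" using Suc.prems(2) vS fS S'_def
        by (simp add: card_Diff_subset)
    qed
    have Cnn: "(\<Sum>F\<in>Pow E. pmf \<mu> F * cnt (\<lambda>a b. {a,b} \<notin> F) k S') \<ge> 0"
      by (intro sum_nonneg mult_nonneg_nonneg) (auto simp: cnt_nonneg)
    show ?thesis unfolding X using mult_mono[OF P0 C order_trans[OF P0nn P0] Cnn] by simp
  qed
  have "(\<Sum>F\<in>Pow E. pmf \<mu> F * cnt (\<lambda>u v. {u,v} \<notin> F) (Suc k) S)
      = (\<Sum>F\<in>Pow E. \<Sum>u\<in>S - {v}. pmf \<mu> F * (if {v,u} \<notin> F then cnt (\<lambda>a b. {a,b} \<notin> F) k (S - {v,u}) else 0))"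
    unfolding v_def by (simp add: sum_distrib_left)
  also have "\<dots> = (\<Sum>u\<in>S - {v}. \<Sum>F\<in>Pow E. pmf \<mu> F * (if {v,u} \<notin> F then cnt (\<lambda>a b. {a,b} \<notin> F) k (S - {v,u}) else 0))"
    by (rule sum.swap)
  also have "\<dots> \<le> (\<Sum>u\<in>S - {v}. (1 - p) * (dfact k * (1-p)^k))"
    by (rule sum_mono) (rule step)
  also have "\<dots> = real (card (S - {v})) * (1 - p) * (dfact k * (1-p)^k)" by simp
  also have "card (S - {v}) = 2 * k + 1" using vS fS Suc.prems(2) by simp
  finally show ?case by (simp add: algebra_simps)
qed

lemma comp_refl: "v \<in> V \<Longrightarrow> v \<in> component V F v"
  unfolding component_def by simp

lemma comp_eq:
  assumes "{u,v} \<in> F"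
  shows "component V F u = component V F v"
proof -
  let ?R = "{(x, y). {x, y} \<in> F}"
  have uv: "(u,v) \<in> ?R" "(v,u) \<in> ?R" using assms by (auto simp: insert_commute)
  show ?thesis unfolding component_def
    using uv converse_rtrancl_into_rtrancl[of u v ?R] converse_rtrancl_into_rtrancl[of v u ?R] by blast
qed

lemma dfact_fact: "dfact n * 2^n * fact n = fact (2*n)"
proof (induction n)
  case (Suc n)
  have "dfact (Suc n) * 2^Suc n * fact (Suc n) = (2 * real n + 1) * (2 * real n + 2) * (dfact n * 2^n * fact n)"
    by (simp add: algebra_simps)
  also have "\<dots> = (2 * real n + 1) * (2 * real n + 2) * fact (2*n)" using Suc by simp
  also have "\<dots> = fact (2 * Suc n)"
    by (simp add: algebra_simps fact_Suc)
  finally show ?case .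
qed simp

lemma dfact_binom: "dfact n * (1-p)^n / fact n = real ((2 * n) choose n) * ((1 - p) / 2) ^ n"
proof -
  have b: "fact n * fact n * real ((2*n) choose n) = fact (2*n)"
  proof -
    have b0: "fact n * fact n * ((2*n) choose n) = (fact (2*n) :: nat)"
      using binomial_fact_lemma[of n "2*n"] by simp
    show ?thesis using arg_cong[OF b0, of real] by simp
  qed
  have "dfact n = fact (2*n) / (2^n * fact n)" using dfact_fact[of n] by (simp add: field_simps)
  also have "\<dots> = real ((2*n) choose n) * fact n / 2^n" using b by (simp add: field_simps)
  finally show ?thesis by (simp add: power_divide)
qed

lemma lower_bound:
  assumes mu: "\<mu> \<in> M1_ge p (complete_edges (Kverts n))"
  shows "measure_pmf.prob \<mu> {F. largest_comp_size (Kverts n) F > n}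
              \<ge> 1 - real ((2 * n) choose n) * ((1 - p) / 2) ^ n"
proof -
  define V where "V = Kverts n"
  define E where "E = complete_edges V"
  have fV: "finite V" and cV: "card V = 2 * n" by (auto simp: V_def Kverts_def)
  have fE: "finite E" using fV E_def finite_complete_edges by simp
  have supp: "set_pmf \<mu> \<subseteq> Pow E" and ind: "one_independent E \<mu>"
    and pe: "\<forall>e\<in>E. measure_pmf.prob \<mu> {F. e \<in> F} \<ge> p"
    using mu by (auto simp: M1_ge_def random_graph_model_def E_def V_def)
  define cntF where "cntF F = cnt (\<lambda>u v. {u,v} \<notin> F) n V" for F
  have pt: "(if largest_comp_size V F \<le> n then 1 else 0) \<le> cntF F / fact n" if F: "F \<in> Pow E" for F
  proof (cases "largest_comp_size V F \<le> n")
    case False then show ?thesis by (simp add: cntF_def cnt_nonneg)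
  next
    case True
    have fimg: "finite ((\<lambda>v. card (component V F v)) ` V)" using fV by simp
    have cs: "card (component V F x) \<le> n" if "x \<in> V" for x
      using Max_ge[OF fimg, of "card (component V F x)"] that True
      unfolding largest_comp_size_def by auto
    have "fact n \<le> cntF F" unfolding cntF_def
    proof (rule cnt_lower[where cls = "component V F"])
      show "finite V" "card V = 2 * n" by (fact fV, fact cV)
      show "\<forall>x\<in>V. card {y \<in> V. component V F y = component V F x} \<le> n"
      proof
        fix x assume x: "x \<in> V"
        have sub: "{y \<in> V. component V F y = component V F x} \<subseteq> component V F x"
        proof
          fix y assume "y \<in> {y \<in> V. component V F y = component V F x}"
          then have "y \<in> V" "component V F y = component V F x" by auto
          then show "y \<in> component V F x" using comp_refl[of y V F] by simp
        qed
        have fc: "finite (component V F x)" using fV by (simp add: component_def)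
        have "card {y \<in> V. component V F y = component V F x} \<le> card (component V F x)"
          by (rule card_mono[OF fc sub])
        then show "card {y \<in> V. component V F y = component V F x} \<le> n"
          using cs[OF x] by linarith
      qed
      show "\<forall>u\<in>V. \<forall>v\<in>V. component V F u \<noteq> component V F v \<longrightarrow> {u, v} \<notin> F"
      proof (intro ballI impI)
        fix u v assume "component V F u \<noteq> component V F v"
        then show "{u, v} \<notin> F" using comp_eq[of u v F V] by blast
      qed
    qed
    then show ?thesis using True by simp
  qed
  have "measure_pmf.prob \<mu> {F. largest_comp_size V F \<le> n} = (\<Sum>F\<in>Pow E \<inter> {F. largest_comp_size V F \<le> n}. pmf \<mu> F)"
    using prob_as_sum[OF _ supp] fE by simp
  also have "\<dots> = (\<Sum>F\<in>Pow E. pmf \<mu> F * (if largest_comp_size V F \<le> n then 1 else 0))"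
    by (subst sum.inter_restrict) (auto simp: fE intro!: sum.cong)
  also have "\<dots> \<le> (\<Sum>F\<in>Pow E. pmf \<mu> F * (cntF F / fact n))"
    by (intro sum_mono mult_left_mono pt) auto
  also have "\<dots> = (\<Sum>F\<in>Pow E. pmf \<mu> F * cntF F) / fact n"
    by (simp add: sum_divide_distrib)
  also have "\<dots> \<le> dfact n * (1-p)^n / fact n"
  proof (rule divide_right_mono)
    show "(\<Sum>F\<in>Pow E. pmf \<mu> F * cntF F) \<le> dfact n * (1 - p) ^ n"
      unfolding cntF_def by (rule cnt_expect[OF fV E_def supp ind pe]) (use cV in auto)
  qed simp
  also have "dfact n * (1-p)^n / fact n = real ((2 * n) choose n) * ((1 - p) / 2) ^ n"
    by (rule dfact_binom)
  finally have le: "measure_pmf.prob \<mu> {F. largest_comp_size V F \<le> n} \<le> real ((2 * n) choose n) * ((1 - p) / 2) ^ n" .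
  have "{F. largest_comp_size V F > n} = UNIV - {F. largest_comp_size V F \<le> n}" by auto
  then have "measure_pmf.prob \<mu> {F. largest_comp_size V F > n} = 1 - measure_pmf.prob \<mu> {F. largest_comp_size V F \<le> n}"
    using measure_pmf.prob_compl[of "{F. largest_comp_size V F \<le> n}" \<mu>] by simp
  then show ?thesis using le V_def by simp
qed

definition cc :: "complex \<Rightarrow> bool \<Rightarrow> complex" where
  "cc t b = (1 + (if b then t else - t)) / 2"
definition Pt :: "complex \<Rightarrow> nat set \<Rightarrow> nat set \<Rightarrow> complex" where
  "Pt t U X = (\<Prod>v\<in>U. cc t (v \<in> X))"
definition Zs :: "complex \<Rightarrow> nat set \<Rightarrow> (nat set \<Rightarrow> real) \<Rightarrow> complex" where
  "Zs t U g = (\<Sum>X\<in>Pow U. complex_of_real (g X) * Pt t U X)"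

lemma sum_Pow_split:
  fixes f g :: "'a set \<Rightarrow> complex"
  assumes "finite A" "finite B" "A \<inter> B = {}"
  shows "(\<Sum>S\<in>Pow (A \<union> B). f (S \<inter> A) * g (S \<inter> B)) = (\<Sum>X\<in>Pow A. f X) * (\<Sum>Y\<in>Pow B. g Y)"
proof -
  have bij: "bij_betw (\<lambda>x. fst x \<union> snd x) (Pow A \<times> Pow B) (Pow (A \<union> B))"
    by (rule bij_betwI[where g="\<lambda>S. (S \<inter> A, S \<inter> B)"]) (use assms(3) in auto)
  have "(\<Sum>S\<in>Pow (A \<union> B). f (S \<inter> A) * g (S \<inter> B))
      = (\<Sum>x\<in>Pow A \<times> Pow B. f ((fst x \<union> snd x) \<inter> A) * g ((fst x \<union> snd x) \<inter> B))"
    using sum.reindex_bij_betw[OF bij, of "\<lambda>S. f (S \<inter> A) * g (S \<inter> B)"] by simp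
  also have "\<dots> = (\<Sum>x\<in>Pow A \<times> Pow B. f (fst x) * g (snd x))"
  proof (rule sum.cong[OF refl])
    fix x assume "x \<in> Pow A \<times> Pow B"
    then have "(fst x \<union> snd x) \<inter> A = fst x" "(fst x \<union> snd x) \<inter> B = snd x" using assms(3) by auto
    then show "f ((fst x \<union> snd x) \<inter> A) * g ((fst x \<union> snd x) \<inter> B) = f (fst x) * g (snd x)" by simp
  qed
  also have "\<dots> = (\<Sum>X\<in>Pow A. \<Sum>Y\<in>Pow B. f X * g Y)"
    by (simp add: sum.cartesian_product case_prod_beta)
  also have "\<dots> = (\<Sum>X\<in>Pow A. f X) * (\<Sum>Y\<in>Pow B. g Y)"
    by (rule sum_product[symmetric])
  finally show ?thesis .
qed

lemma Pt_split:
  assumes "finite A" "finite B" "A \<inter> B = {}"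
  shows "Pt t (A \<union> B) S = Pt t A (S \<inter> A) * Pt t B (S \<inter> B)"
proof -
  have "Pt t (A \<union> B) S = (\<Prod>v\<in>A. cc t (v \<in> S)) * (\<Prod>v\<in>B. cc t (v \<in> S))"
    unfolding Pt_def by (rule prod.union_disjoint[OF assms])
  also have "(\<Prod>v\<in>A. cc t (v \<in> S)) = Pt t A (S \<inter> A)" unfolding Pt_def by (rule prod.cong) auto
  also have "(\<Prod>v\<in>B. cc t (v \<in> S)) = Pt t B (S \<inter> B)" unfolding Pt_def by (rule prod.cong) auto
  finally show ?thesis .
qed

lemma Lsplit:
  assumes "finite A" "finite B" "A \<inter> B = {}"
  shows "(\<Sum>S\<in>Pow (A \<union> B). complex_of_real (g (S \<inter> A)) * complex_of_real (h (S \<inter> B)) * Pt t (A \<union> B) S)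
     = Zs t A g * Zs t B h"
proof -
  have "(\<Sum>S\<in>Pow (A \<union> B). complex_of_real (g (S \<inter> A)) * complex_of_real (h (S \<inter> B)) * Pt t (A \<union> B) S)
     = (\<Sum>S\<in>Pow (A \<union> B). (\<lambda>X. complex_of_real (g X) * Pt t A X) (S \<inter> A) * (\<lambda>Y. complex_of_real (h Y) * Pt t B Y) (S \<inter> B))"
    by (rule sum.cong[OF refl]) (simp add: Pt_split[OF assms])
  also have "\<dots> = Zs t A g * Zs t B h"
    unfolding Zs_def by (rule sum_Pow_split[OF assms])
  finally show ?thesis .
qed

lemma Zs_one:
  assumes "finite R"
  shows "Zs t R (\<lambda>_. 1) = 1"
proof -
  have "(\<Prod>v\<in>R. cc t True + cc t False) = (\<Sum>X\<in>Pow R. (\<Prod>v\<in>X. cc t True) * (\<Prod>v\<in>R - X. cc t False))"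
    by (rule prod_add[OF assms])
  also have "\<dots> = (\<Sum>X\<in>Pow R. Pt t R X)"
  proof (rule sum.cong[OF refl])
    fix X assume X: "X \<in> Pow R"
    have fX: "finite X" "finite (R - X)" using X assms finite_subset by auto
    have "Pt t R X = Pt t (X \<union> (R - X)) X" using X by (simp add: Un_absorb1 Un_Diff_cancel)
    also have "\<dots> = Pt t X (X \<inter> X) * Pt t (R - X) (X \<inter> (R - X))"
      by (rule Pt_split) (use fX in auto)
    also have "Pt t X (X \<inter> X) = (\<Prod>v\<in>X. cc t True)" unfolding Pt_def by simp
    also have "Pt t (R - X) (X \<inter> (R - X)) = (\<Prod>v\<in>R - X. cc t False)" unfolding Pt_def by (rule prod.cong) auto
    finally show "(\<Prod>v\<in>X. cc t True) * (\<Prod>v\<in>R - X. cc t False) = Pt t R X" by simp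
  qed
  moreover have "cc t True + cc t False = 1" by (simp add: cc_def field_simps)
  ultimately show ?thesis unfolding Zs_def by simp
qed

lemma Kform:
  assumes "finite V" "U \<subseteq> V" "W \<subseteq> V" "U \<inter> W = {}"
  shows "(\<Sum>S\<in>Pow V. complex_of_real (g (S \<inter> U)) * complex_of_real (h (S \<inter> W)) * Pt t V S)
     = Zs t U g * Zs t W h"
proof -
  define R where "R = V - U - W"
  have fin: "finite U" "finite W" "finite R" using assms finite_subset R_def by auto
  have V: "V = U \<union> (W \<union> R)" using assms R_def by auto
  have d1: "U \<inter> (W \<union> R) = {}" "W \<inter> R = {}" using assms R_def by auto
  have "(\<Sum>S\<in>Pow V. complex_of_real (g (S \<inter> U)) * complex_of_real (h (S \<inter> W)) * Pt t V S)
     = (\<Sum>S\<in>Pow V. complex_of_real (g (S \<inter> U)) * complex_of_real ((\<lambda>Y. h (Y \<inter> W)) (S \<inter> (W \<union> R))) * Pt t V S)"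
  proof (rule sum.cong[OF refl])
    fix S
    have "(S \<inter> (W \<union> R)) \<inter> W = S \<inter> W" by auto
    then show "complex_of_real (g (S \<inter> U)) * complex_of_real (h (S \<inter> W)) * Pt t V S =
      complex_of_real (g (S \<inter> U)) * complex_of_real ((\<lambda>Y. h (Y \<inter> W)) (S \<inter> (W \<union> R))) * Pt t V S" by simp
  qed
  also have "\<dots> = Zs t U g * Zs t (W \<union> R) (\<lambda>Y. h (Y \<inter> W))"
    using Lsplit[of U "W \<union> R" g "\<lambda>Y. h (Y \<inter> W)" t] fin d1 V by simp
  also have "Zs t (W \<union> R) (\<lambda>Y. h (Y \<inter> W)) = Zs t W h * Zs t R (\<lambda>_. 1)"
    using Lsplit[of W R h "\<lambda>_. 1" t] fin d1 unfolding Zs_def[of t "W \<union> R"] by simp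
  also have "Zs t R (\<lambda>_. 1) = 1" by (rule Zs_one[OF fin(3)])
  finally show ?thesis by simp
qed

lemma cc_cnj: "cnj (cc t b) = cc (cnj t) b"
  by (cases b) (simp_all add: cc_def)

lemma Zs_cnj: "cnj (Zs t U g) = Zs (cnj t) U g"
  unfolding Zs_def Pt_def by (simp add: cc_cnj)

lemma Zs_neg:
  assumes "finite U" "\<forall>X\<in>Pow U. g (U - X) = g X"
  shows "Zs (- t) U g = Zs t U g"
  unfolding Zs_def
proof (rule sum.reindex_bij_witness[of _ "\<lambda>X. U - X" "\<lambda>X. U - X"])
  fix X assume X: "X \<in> Pow U"
  show "U - (U - X) = X" using X by auto
  show "U - X \<in> Pow U" by auto
next
  fix X assume X: "X \<in> Pow U"
  show "U - (U - X) = X" using X by auto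
  show "U - X \<in> Pow U" by auto
next
  fix X assume X: "X \<in> Pow U"
  have "Pt t U (U - X) = Pt (- t) U X"
    unfolding Pt_def by (rule prod.cong) (auto simp: cc_def)
  then show "complex_of_real (g (U - X)) * Pt t U (U - X) = complex_of_real (g X) * Pt (- t) U X"
    using assms(2) X by simp
qed

lemma Im_Zs:
  assumes "cnj t = t \<or> cnj t = - t" "finite U" "\<forall>X\<in>Pow U. g (U - X) = g X"
  shows "Im (Zs t U g) = 0"
proof -
  have "cnj (Zs t U g) = Zs t U g"
    using assms Zs_cnj[of t U g] Zs_neg[OF assms(2,3), of t] by auto
  then have "Im (cnj (Zs t U g)) = Im (Zs t U g)" by simp
  then show ?thesis by simp
qed

lemma Re_sum_form:
  assumes "finite V" "U \<subseteq> V" "W \<subseteq> V" "U \<inter> W = {}"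
  shows "(\<Sum>S\<in>Pow V. Re (Pt t V S) * (g (S \<inter> U) * h (S \<inter> W))) = Re (Zs t U g * Zs t W h)"
proof -
  have "Re (Zs t U g * Zs t W h) = Re (\<Sum>S\<in>Pow V. complex_of_real (g (S \<inter> U)) * complex_of_real (h (S \<inter> W)) * Pt t V S)"
    using Kform[OF assms] by simp
  also have "\<dots> = (\<Sum>S\<in>Pow V. Re (Pt t V S) * (g (S \<inter> U) * h (S \<inter> W)))"
    by (simp add: Re_sum mult.commute mult.left_commute)
  finally show ?thesis by simp
qed

definition tt :: "real \<Rightarrow> complex" where
  "tt p = (if 0 \<le> 2*p - 1 then complex_of_real (sqrt (2*p-1)) else \<i> * complex_of_real (sqrt (1 - 2*p)))"

lemma tt_sq: "tt p ^ 2 = complex_of_real (2*p - 1)"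
proof (cases "0 \<le> 2*p - 1")
  case True
  then show ?thesis unfolding tt_def by (simp flip: of_real_power)
next
  case False
  then have "sqrt (1 - 2*p) ^ 2 = 1 - 2*p" by simp
  then have "complex_of_real (sqrt (1 - 2*p)) ^ 2 = complex_of_real (1 - 2*p)"
    by (metis of_real_power)
  then show ?thesis using False unfolding tt_def by (simp add: power_mult_distrib)
qed

lemma tt_cnj: "cnj (tt p) = tt p \<or> cnj (tt p) = - tt p"
  unfolding tt_def by auto

lemma Pt_card:
  assumes "finite V" "S \<subseteq> V"
  shows "Pt t V S = cc t True ^ card S * cc t False ^ card (V - S)"
proof -
  have fS: "finite S" "finite (V - S)" using assms finite_subset by auto
  have "Pt t V S = Pt t (S \<union> (V - S)) S" using assms by (simp add: Un_absorb1)
  also have "\<dots> = Pt t S (S \<inter> S) * Pt t (V - S) (S \<inter> (V - S))"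
    by (rule Pt_split) (use fS in auto)
  also have "Pt t S (S \<inter> S) = cc t True ^ card S" unfolding Pt_def by simp
  also have "Pt t (V - S) (S \<inter> (V - S)) = cc t False ^ card (V - S)"
    unfolding Pt_def by (subst prod.cong[OF refl, of _ _ "\<lambda>_. cc t False"]) auto
  finally show ?thesis .
qed

lemma cos_nonneg_bound:
  fixes k m n :: nat and \<phi> :: real
  assumes "k + m = 2 * n" "n \<ge> 1" "0 \<le> \<phi>" "\<phi> \<le> pi / (4 * real n)"
  shows "0 \<le> cos (real k * \<phi> + real m * (- \<phi>))"
proof -
  have e: "real k * \<phi> + real m * (- \<phi>) = (real k - real m) * \<phi>" by (simp add: algebra_simps)
  have "\<bar>real k - real m\<bar> \<le> 2 * real n" using assms(1) by linarith
  then have "\<bar>(real k - real m) * \<phi>\<bar> \<le> 2 * real n * \<phi>"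
    using assms(3) by (simp add: abs_mult mult_right_mono)
  also have "\<dots> \<le> 2 * real n * (pi / (4 * real n))"
    using assms(4) by (intro mult_left_mono) auto
  also have "\<dots> = pi / 2" using assms(2) by (simp add: field_simps)
  finally have "\<bar>(real k - real m) * \<phi>\<bar> \<le> pi / 2" .
  then show ?thesis unfolding e by (intro cos_ge_zero) auto
qed

lemma wt_nonneg:
  assumes n1: "n \<ge> 1" and pl: "(1 - tan (pi / (4 * real n)) ^ 2) / 2 \<le> p" and pu: "p \<le> 1"
    and fV: "finite V" and cV: "card V = 2*n" and SV: "S \<subseteq> V"
  shows "Re (Pt (tt p) V S) \<ge> 0"
proof -
  define k where "k = card S"
  define m where "m = card (V - S)"
  have km: "k + m = 2 * n" unfolding k_def m_def using fV SV cV
    by (metis card_Diff_subset finite_subset le_add_diff_inverse card_mono)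
  have P: "Pt (tt p) V S = cc (tt p) True ^ k * cc (tt p) False ^ m"
    unfolding k_def m_def by (rule Pt_card[OF fV SV])
  show ?thesis
  proof (cases "0 \<le> 2*p - 1")
    case True
    define s where "s = sqrt (2*p - 1)"
    have s1: "s \<le> 1" unfolding s_def using pu by simp
    have e1: "cc (tt p) True = complex_of_real ((1+s)/2)" and e2: "cc (tt p) False = complex_of_real ((1-s)/2)"
    proof -
      have T1: "1 \<le> 2*p" using True by linarith
      show "cc (tt p) True = complex_of_real ((1+s)/2)" unfolding cc_def tt_def s_def using T1 by simp
      show "cc (tt p) False = complex_of_real ((1-s)/2)" unfolding cc_def tt_def s_def using T1 by simp
    qed
    have PE: "Pt (tt p) V S = complex_of_real (((1+s)/2) ^ k * ((1-s)/2) ^ m)"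
      unfolding P e1 e2 by simp
    have s0: "0 \<le> s" unfolding s_def using True by simp
    have "0 \<le> ((1+s)/2) ^ k * ((1-s)/2) ^ m" using s0 s1 by simp
    then show ?thesis unfolding PE by simp
  next
    case False
    define s where "s = sqrt (1 - 2*p)"
    define \<phi> where "\<phi> = arctan s"
    define a where "a = 1 / (2 * cos \<phi>)"
    have s0: "0 \<le> s" unfolding s_def using False by simp
    have cpos: "cos \<phi> > 0" unfolding \<phi>_def using arctan_lbound arctan_ubound by (intro cos_gt_zero_pi) auto
    have apos: "a > 0" unfolding a_def using cpos by simp
    have tphi: "sin \<phi> / cos \<phi> = s" using tan_arctan[of s] unfolding \<phi>_def tan_def by simp
    have t: "tt p = \<i> * complex_of_real s" unfolding tt_def s_def using False by simp
    have c1: "cc (tt p) True = rcis a \<phi>"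
    proof (rule complex_eqI)
      show "Re (cc (tt p) True) = Re (rcis a \<phi>)" unfolding t cc_def a_def using cpos by simp
      show "Im (cc (tt p) True) = Im (rcis a \<phi>)" unfolding t cc_def a_def using cpos tphi by simp
    qed
    have c2: "cc (tt p) False = rcis a (- \<phi>)"
    proof (rule complex_eqI)
      show "Re (cc (tt p) False) = Re (rcis a (- \<phi>))" unfolding t cc_def a_def using cpos by simp
      show "Im (cc (tt p) False) = Im (rcis a (- \<phi>))" unfolding t cc_def a_def using cpos tphi by simp
    qed
    have "Pt (tt p) V S = rcis (a ^ k * a ^ m) (real k * \<phi> + real m * (- \<phi>))"
      unfolding P c1 c2 DeMoivre2 rcis_mult by simp
    then have Re: "Re (Pt (tt p) V S) = a ^ k * a ^ m * cos (real k * \<phi> + real m * (- \<phi>))" by simp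
    have phi0: "0 \<le> \<phi>" unfolding \<phi>_def using s0 by simp
    have x0: "0 < pi / (4 * real n)" using n1 by simp
    have x1: "pi / (4 * real n) < pi / 2" using n1 by (simp add: field_simps)
    have tpos: "0 < tan (pi / (4 * real n))" using x0 x1 by (rule tan_gt_zero)
    have "1 - 2*p \<le> tan (pi / (4 * real n)) ^ 2" using pl by simp
    then have "s \<le> sqrt (tan (pi / (4 * real n)) ^ 2)" unfolding s_def by (rule real_sqrt_le_mono)
    then have "s \<le> tan (pi / (4 * real n))" using tpos by simp
    then have "\<phi> \<le> arctan (tan (pi / (4 * real n)))" unfolding \<phi>_def by (rule arctan_monotone')
    also have "\<dots> = pi / (4 * real n)" by (rule arctan_tan) (use x0 x1 in auto)
    finally have phi1: "\<phi> \<le> pi / (4 * real n)" .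
    have "0 \<le> cos (real k * \<phi> + real m * (- \<phi>))" by (rule cos_nonneg_bound[OF km n1 phi0 phi1])
    then show ?thesis unfolding Re using apos by simp
  qed
qed

definition Fof :: "nat set \<Rightarrow> nat set \<Rightarrow> nat set set" where
  "Fof V S = {e \<in> complete_edges V. \<forall>u\<in>e. \<forall>w\<in>e. (u \<in> S \<longleftrightarrow> w \<in> S)}"

lemma finite_pmf_exists:
  fixes f :: "'a \<Rightarrow> real"
  assumes "finite A" "\<And>x. 0 \<le> f x" "\<And>x. x \<notin> A \<Longrightarrow> f x = 0" "sum f A = 1"
  shows "\<exists>\<rho>. \<forall>x. pmf \<rho> x = f x"
proof -
  have "(\<integral>\<^sup>+x. ennreal (f x) \<partial>count_space UNIV) = (\<Sum>x\<in>A. ennreal (f x))"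
    by (rule nn_integral_count_space') (use assms in auto)
  also have "\<dots> = ennreal (sum f A)" using assms(2) by (simp add: sum_ennreal)
  also have "\<dots> = 1" using assms(4) by simp
  finally show ?thesis using pmf_embed_pmf[of f] assms(2) by blast
qed

lemma Fof_sub: "Fof V S \<subseteq> complete_edges V"
  unfolding Fof_def by auto

lemma complete_edges_sub: "e \<in> complete_edges V \<Longrightarrow> e \<subseteq> V"
  unfolding complete_edges_def by auto

lemma Fof_restrict:
  shows "Fof V S \<inter> A = Fof V (S \<inter> \<Union>A) \<inter> A"
proof (intro set_eqI)
  fix e
  show "e \<in> Fof V S \<inter> A \<longleftrightarrow> e \<in> Fof V (S \<inter> \<Union>A) \<inter> A"
  proof (cases "e \<in> A")
    case True
    then have "\<And>u. u \<in> e \<Longrightarrow> u \<in> \<Union>A" by blast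
    then have "(\<forall>u\<in>e. \<forall>w\<in>e. (u \<in> S \<longleftrightarrow> w \<in> S)) \<longleftrightarrow> (\<forall>u\<in>e. \<forall>w\<in>e. (u \<in> S \<inter> \<Union>A \<longleftrightarrow> w \<in> S \<inter> \<Union>A))"
      by simp
    then show ?thesis unfolding Fof_def using True by simp
  next
    case False then show ?thesis by simp
  qed
qed

lemma Fof_flip:
  assumes "Z \<subseteq> \<Union>A"
  shows "Fof V (\<Union>A - Z) \<inter> A = Fof V Z \<inter> A"
proof (intro set_eqI)
  fix e
  show "e \<in> Fof V (\<Union>A - Z) \<inter> A \<longleftrightarrow> e \<in> Fof V Z \<inter> A"
  proof (cases "e \<in> A")
    case True
    then have e: "\<And>u. u \<in> e \<Longrightarrow> (u \<in> \<Union>A - Z) = (u \<notin> Z)" by blast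
    have "(\<forall>u\<in>e. \<forall>w\<in>e. (u \<in> \<Union>A - Z \<longleftrightarrow> w \<in> \<Union>A - Z)) \<longleftrightarrow> (\<forall>u\<in>e. \<forall>w\<in>e. (u \<notin> Z \<longleftrightarrow> w \<notin> Z))"
      using e by (intro ball_cong refl) simp
    also have "\<dots> \<longleftrightarrow> (\<forall>u\<in>e. \<forall>w\<in>e. (u \<in> Z \<longleftrightarrow> w \<in> Z))" by simp
    finally have "(\<forall>u\<in>e. \<forall>w\<in>e. (u \<in> \<Union>A - Z \<longleftrightarrow> w \<in> \<Union>A - Z)) \<longleftrightarrow> (\<forall>u\<in>e. \<forall>w\<in>e. (u \<in> Z \<longleftrightarrow> w \<in> Z))" .
    then show ?thesis unfolding Fof_def using True by simp
  next
    case False then show ?thesis by simp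
  qed
qed

lemma comp_Fof:
  assumes "v \<in> V"
  shows "component V (Fof V S) v = {w\<in>V. w \<in> S \<longleftrightarrow> v \<in> S}"
proof -
  let ?R = "{(x, y). {x, y} \<in> Fof V S}"
  have R: "x \<in> V \<and> y \<in> V \<and> (x \<in> S \<longleftrightarrow> y \<in> S)" if "(x,y) \<in> ?R" for x y
  proof -
    have h: "{x,y} \<in> Fof V S" using that by simp
    then have h1: "{x,y} \<in> complete_edges V" and h2: "\<forall>u\<in>{x,y}. \<forall>w\<in>{x,y}. (u \<in> S \<longleftrightarrow> w \<in> S)"
      unfolding Fof_def by blast+
    have "{x,y} \<subseteq> V" by (rule complete_edges_sub[OF h1])
    moreover have "(x \<in> S \<longleftrightarrow> y \<in> S)" using h2 by blast
    ultimately show ?thesis by simp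
  qed
  have fw: "w = v \<or> (w \<in> V \<and> (w \<in> S \<longleftrightarrow> v \<in> S))" if "(v, w) \<in> ?R\<^sup>*" for w
    using that
  proof (induction rule: rtrancl_induct)
    case base then show ?case by simp
  next
    case (step y z)
    have "z \<in> V" "(z \<in> S \<longleftrightarrow> y \<in> S)" using R[OF step(2)] by auto
    moreover have "y = v \<or> (y \<in> S \<longleftrightarrow> v \<in> S)" using step(3) by blast
    ultimately show ?case by blast
  qed
  have bw: "(v, w) \<in> ?R\<^sup>*" if "w \<in> V" "w \<in> S \<longleftrightarrow> v \<in> S" for w
  proof (cases "w = v")
    case True then show ?thesis by simp
  next
    case False
    have "{v,w} \<in> complete_edges V" by (rule doubleton_in_complete_edges) (use assms that False in auto)
    then have "{v,w} \<in> Fof V S" unfolding Fof_def using that by auto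
    then show ?thesis by (intro r_into_rtrancl) simp
  qed
  show ?thesis unfolding component_def
  proof (intro set_eqI iffI)
    fix w assume "w \<in> {w \<in> V. (v, w) \<in> ?R\<^sup>*}"
    then have "w \<in> V" "(v, w) \<in> ?R\<^sup>*" by auto
    then show "w \<in> {w \<in> V. (w \<in> S) = (v \<in> S)}" using fw[of w] by auto
  next
    fix w assume "w \<in> {w \<in> V. (w \<in> S) = (v \<in> S)}"
    then have "w \<in> V" "(w \<in> S) = (v \<in> S)" by auto
    then show "w \<in> {w \<in> V. (v, w) \<in> ?R\<^sup>*}" using bw[of w] by simp
  qed
qed

lemma lcs_Fof:
  assumes fV: "finite V" and cV: "card V = 2 * n" and n1: "n \<ge> 1" and SV: "S \<subseteq> V"
  shows "largest_comp_size V (Fof V S) > n \<longleftrightarrow> card S \<noteq> n"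
proof -
  have cD: "card (V - S) = 2 * n - card S" using card_Diff_subset[of S V] fV SV cV finite_subset by metis
  have cs: "card (component V (Fof V S) v) = (if v \<in> S then card S else 2 * n - card S)" if "v \<in> V" for v
  proof (cases "v \<in> S")
    case True
    then have "{w\<in>V. w \<in> S \<longleftrightarrow> v \<in> S} = S" using SV by auto
    then show ?thesis using comp_Fof[OF that] True by simp
  next
    case False
    then have "{w\<in>V. w \<in> S \<longleftrightarrow> v \<in> S} = V - S" by auto
    then show ?thesis using comp_Fof[OF that] False cD by simp
  qed
  have ne: "V \<noteq> {}" using cV n1 by auto
  have "largest_comp_size V (Fof V S) > n \<longleftrightarrow> (\<exists>v\<in>V. card (component V (Fof V S) v) > n)"
    unfolding largest_comp_size_def using fV ne by (simp add: Max_gr_iff)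
  also have "\<dots> \<longleftrightarrow> card S \<noteq> n"
  proof
    assume "\<exists>v\<in>V. card (component V (Fof V S) v) > n"
    then obtain v where "v \<in> V" "card (component V (Fof V S) v) > n" by auto
    then show "card S \<noteq> n" using cs[of v] by (auto split: if_splits)
  next
    assume ne: "card S \<noteq> n"
    have cSle: "card S \<le> 2 * n" using SV fV cV card_mono by metis
    show "\<exists>v\<in>V. card (component V (Fof V S) v) > n"
    proof (cases "card S > n")
      case True
      then have "S \<noteq> {}" by auto
      then obtain v where "v \<in> S" by auto
      then show ?thesis using cs[of v] SV True by (intro bexI[of _ v]) auto
    next
      case False
      then have "card (V - S) > n" using ne cD by simp
      then have "V - S \<noteq> {}" by (metis card.empty not_less_zero)
      then obtain v where "v \<in> V - S" by auto
      then show ?thesis using cs[of v] False ne cSle by (intro bexI[of _ v]) auto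
    qed
  qed
  finally show ?thesis .
qed

lemma Zs_edge:
  assumes "a \<noteq> b"
  shows "Zs t {a,b} (\<lambda>Z. if (a \<in> Z \<longleftrightarrow> b \<in> Z) then 1 else 0) = cc t True ^ 2 + cc t False ^ 2"
proof -
  have P: "Pow {a,b} = {{}, {a}, {b}, {a,b}}" by blast
  have Pt2: "Pt t {a,b} Z = cc t (a \<in> Z) * cc t (b \<in> Z)" for Z
    unfolding Pt_def using assms by simp
  show ?thesis unfolding Zs_def P using assms by (simp add: Pt2 power2_eq_square)
qed

lemma existence:
  fixes n :: nat and p :: real
  assumes n1: "n \<ge> 1"
    and pl: "(1 - tan (pi / (4 * real n)) ^ 2) / 2 \<le> p" and pu: "p \<le> 1"
  shows "\<exists>\<mu>\<in>M1_ge p (complete_edges (Kverts n)).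
            measure_pmf.prob \<mu> {F. largest_comp_size (Kverts n) F > n}
              = 1 - real ((2 * n) choose n) * ((1 - p) / 2) ^ n"
proof -
  define V where "V = Kverts n"
  define E where "E = complete_edges V"
  define t where "t = tt p"
  have fV: "finite V" and cV: "card V = 2 * n" by (auto simp: V_def Kverts_def)
  define w where "w S = (if S \<subseteq> V then Re (Pt t V S) else 0)" for S
  have wnn: "0 \<le> w S" for S
  proof (cases "S \<subseteq> V")
    case True then show ?thesis unfolding w_def t_def using wt_nonneg[OF n1 pl pu fV cV True] by simp
  qed (simp add: w_def)
  have sumw: "(\<Sum>S\<in>Pow V. Re (Pt t V S) * (g (S \<inter> U) * h (S \<inter> W))) = Re (Zs t U g * Zs t W h)"
    if "U \<subseteq> V" "W \<subseteq> V" "U \<inter> W = {}" for g h U W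
    by (rule Re_sum_form[OF fV that])
  have Z0: "Zs t {} (\<lambda>_. 1) = 1" by (rule Zs_one) simp
  have tot: "(\<Sum>S\<in>Pow V. Re (Pt t V S)) = 1"
    using sumw[of "{}" "{}" "\<lambda>_. 1" "\<lambda>_. 1"] Z0 by simp
  have "sum w (Pow V) = (\<Sum>S\<in>Pow V. Re (Pt t V S))" by (rule sum.cong) (auto simp: w_def)
  then have sw: "sum w (Pow V) = 1" using tot by simp
  have fP: "finite (Pow V)" using fV by simp
  have w0: "w x = 0" if "x \<notin> Pow V" for x using that by (simp add: w_def)
  obtain \<rho> where \<rho>: "\<forall>S. pmf \<rho> S = w S"
    using finite_pmf_exists[of "Pow V" w, OF fP wnn w0 sw] by blast
  have supp\<rho>: "set_pmf \<rho> \<subseteq> Pow V"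
  proof
    fix S assume "S \<in> set_pmf \<rho>"
    then have "pmf \<rho> S \<noteq> 0" by (simp add: set_pmf_eq)
    then show "S \<in> Pow V" using \<rho> w0 by metis
  qed
  define \<mu> where "\<mu> = map_pmf (Fof V) \<rho>"
  have probQ: "measure_pmf.prob \<mu> Q = (\<Sum>S\<in>Pow V. Re (Pt t V S) * (if Fof V S \<in> Q then 1 else 0))" for Q
  proof -
    have "measure_pmf.prob \<mu> Q = measure_pmf.prob \<rho> (Fof V -` Q)" unfolding \<mu>_def by simp
    also have "\<dots> = (\<Sum>S\<in>Pow V \<inter> (Fof V -` Q). pmf \<rho> S)" by (rule prob_as_sum[OF fP supp\<rho>])
    also have "\<dots> = (\<Sum>S\<in>Pow V. if S \<in> Fof V -` Q then pmf \<rho> S else 0)"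
      by (rule sum.inter_restrict[OF fP])
    also have "\<dots> = (\<Sum>S\<in>Pow V. Re (Pt t V S) * (if Fof V S \<in> Q then 1 else 0))"
      by (rule sum.cong) (auto simp: \<rho> w_def)
    finally show ?thesis .
  qed
  have FofE: "Fof V S \<in> Pow E" for S using Fof_sub[of V S] E_def by simp
  have rgm: "random_graph_model E \<mu>" unfolding random_graph_model_def \<mu>_def using FofE by auto
  have UE: "\<Union>A \<subseteq> V" if "A \<subseteq> E" for A
  proof
    fix x assume "x \<in> \<Union>A"
    then obtain e where "e \<in> A" "x \<in> e" by blast
    then show "x \<in> V" using that complete_edges_sub[of e V] E_def by blast
  qed
  have tc: "cnj t = t \<or> cnj t = - t" unfolding t_def by (rule tt_cnj)
  have oi: "one_independent E \<mu>"
    unfolding one_independent_def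
  proof (intro allI impI)
    fix A B :: "nat set set" and X Y :: "nat set set"
    assume A: "A \<subseteq> E" and B: "B \<subseteq> E" and d: "\<Union>A \<inter> \<Union>B = {}"
    define g where "g Z = (if Fof V Z \<inter> A = X then 1 else 0 :: real)" for Z
    define h where "h Z = (if Fof V Z \<inter> B = Y then 1 else 0 :: real)" for Z
    have fA: "finite (\<Union>A)" using UE[OF A] fV finite_subset by blast
    have fB: "finite (\<Union>B)" using UE[OF B] fV finite_subset by blast
    have gflip: "\<forall>Z\<in>Pow (\<Union>A). g (\<Union>A - Z) = g Z" unfolding g_def using Fof_flip[of _ A V] by auto
    have ImA: "Im (Zs t (\<Union>A) g) = 0" by (rule Im_Zs[OF tc fA gflip])
    have gr: "g (S \<inter> \<Union>A) = (if Fof V S \<inter> A = X then 1 else 0)" for S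
      unfolding g_def using Fof_restrict[of V S A] by simp
    have hr: "h (S \<inter> \<Union>B) = (if Fof V S \<inter> B = Y then 1 else 0)" for S
      unfolding h_def using Fof_restrict[of V S B] by simp
    have "measure_pmf.prob \<mu> {F. F \<inter> A = X \<and> F \<inter> B = Y} = (\<Sum>S\<in>Pow V. Re (Pt t V S) * (g (S \<inter> \<Union>A) * h (S \<inter> \<Union>B)))"
      unfolding probQ gr hr by (rule sum.cong) auto
    also have "\<dots> = Re (Zs t (\<Union>A) g * Zs t (\<Union>B) h)" by (rule sumw[OF UE[OF A] UE[OF B] d])
    also have "\<dots> = Re (Zs t (\<Union>A) g) * Re (Zs t (\<Union>B) h)" using ImA by simp
    finally have J: "measure_pmf.prob \<mu> {F. F \<inter> A = X \<and> F \<inter> B = Y} = Re (Zs t (\<Union>A) g) * Re (Zs t (\<Union>B) h)" .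
    have "measure_pmf.prob \<mu> {F. F \<inter> A = X} = (\<Sum>S\<in>Pow V. Re (Pt t V S) * (g (S \<inter> \<Union>A) * (\<lambda>_. 1) (S \<inter> {})))"
      unfolding probQ gr by (rule sum.cong) auto
    also have "\<dots> = Re (Zs t (\<Union>A) g * Zs t {} (\<lambda>_. 1))" by (rule sumw) (use UE[OF A] in auto)
    finally have JA: "measure_pmf.prob \<mu> {F. F \<inter> A = X} = Re (Zs t (\<Union>A) g)" using Z0 by simp
    have "measure_pmf.prob \<mu> {F. F \<inter> B = Y} = (\<Sum>S\<in>Pow V. Re (Pt t V S) * (h (S \<inter> \<Union>B) * (\<lambda>_. 1) (S \<inter> {})))"
      unfolding probQ hr by (rule sum.cong) auto
    also have "\<dots> = Re (Zs t (\<Union>B) h * Zs t {} (\<lambda>_. 1))" by (rule sumw) (use UE[OF B] in auto)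
    finally have JB: "measure_pmf.prob \<mu> {F. F \<inter> B = Y} = Re (Zs t (\<Union>B) h)" using Z0 by simp
    show "measure_pmf.prob \<mu> {F. F \<inter> A = X \<and> F \<inter> B = Y} =
          measure_pmf.prob \<mu> {F. F \<inter> A = X} * measure_pmf.prob \<mu> {F. F \<inter> B = Y}"
      unfolding J JA JB ..
  qed
  have t2: "t ^ 2 = complex_of_real (2*p - 1)" unfolding t_def by (rule tt_sq)
  have ep: "\<forall>e\<in>E. measure_pmf.prob \<mu> {F. e \<in> F} \<ge> p"
  proof
    fix e assume eE: "e \<in> E"
    then obtain a b where ab: "a \<in> V" "b \<in> V" "a \<noteq> b" "e = {a,b}" unfolding E_def complete_edges_def by blast
    define g where "g Z = (if (a \<in> Z \<longleftrightarrow> b \<in> Z) then 1 else 0 :: real)" for Z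
    have gr: "(if Fof V S \<in> {F. e \<in> F} then 1 else 0) = g (S \<inter> {a,b}) * (\<lambda>_. 1) (S \<inter> {})" for S
    proof -
      have "e \<in> Fof V S \<longleftrightarrow> (a \<in> S \<longleftrightarrow> b \<in> S)" unfolding Fof_def using eE E_def ab(4) by auto
      then show ?thesis unfolding g_def by simp
    qed
    have "measure_pmf.prob \<mu> {F. e \<in> F} = (\<Sum>S\<in>Pow V. Re (Pt t V S) * (g (S \<inter> {a,b}) * (\<lambda>_. 1) (S \<inter> {})))"
      unfolding probQ gr ..
    also have "\<dots> = Re (Zs t {a,b} g * Zs t {} (\<lambda>_. 1))" by (rule sumw) (use ab in auto)
    also have "Zs t {a,b} g = cc t True ^ 2 + cc t False ^ 2" unfolding g_def by (rule Zs_edge[OF ab(3)])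
    also have "cc t True ^ 2 + cc t False ^ 2 = (1 + t^2) / 2" by (simp add: cc_def power2_eq_square field_simps)
    finally show "measure_pmf.prob \<mu> {F. e \<in> F} \<ge> p" using Z0 t2 by simp
  qed
  have M: "\<mu> \<in> M1_ge p (complete_edges (Kverts n))"
    unfolding M1_ge_def using rgm oi ep E_def V_def by simp
  have cT: "Re (Pt t V S) = ((1-p)/2)^n" if "S \<in> Pow V" "card S = n" for S
  proof -
    have "card (V - S) = n" using that fV cV by (simp add: card_Diff_subset finite_subset)
    then have "Pt t V S = (cc t True * cc t False) ^ n" using Pt_card[OF fV, of S t] that by (simp add: power_mult_distrib)
    also have "cc t True * cc t False = (1 - t^2) / 4" by (simp add: cc_def power2_eq_square field_simps)
    also have "\<dots> = complex_of_real ((1-p)/2)" using t2 by simp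
    finally show ?thesis by (simp flip: of_real_power)
  qed
  have "measure_pmf.prob \<mu> {F. largest_comp_size V F > n}
      = (\<Sum>S\<in>Pow V. Re (Pt t V S) * (if largest_comp_size V (Fof V S) > n then 1 else 0))"
    unfolding probQ by simp
  also have "\<dots> = (\<Sum>S\<in>Pow V. Re (Pt t V S) - (if card S = n then Re (Pt t V S) else 0))"
    by (rule sum.cong) (use lcs_Fof[OF fV cV n1] in auto)
  also have "\<dots> = 1 - (\<Sum>S\<in>Pow V. if card S = n then Re (Pt t V S) else 0)"
    by (simp add: sum_subtractf tot)
  also have "(\<Sum>S\<in>Pow V. if card S = n then Re (Pt t V S) else 0) = (\<Sum>S\<in>Pow V \<inter> {S. card S = n}. Re (Pt t V S))"
    using sum.inter_restrict[of "Pow V" "\<lambda>S. Re (Pt t V S)" "{S. card S = n}"] fV by simp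
  also have "\<dots> = (\<Sum>S\<in>Pow V \<inter> {S. card S = n}. ((1-p)/2)^n)"
    by (rule sum.cong) (use cT in auto)
  also have "\<dots> = real (card (Pow V \<inter> {S. card S = n})) * ((1-p)/2)^n" by simp
  also have "Pow V \<inter> {S. card S = n} = {B. B \<subseteq> V \<and> card B = n}" by auto
  also have "card {B. B \<subseteq> V \<and> card B = n} = (2 * n) choose n" using n_subsets[OF fV, of n] cV by simp
  finally show ?thesis using M V_def by auto
qed

theorem proposition16:
  fixes n :: nat and p :: real
  assumes "n \<ge> 1"
    and "(1 - tan (pi / (4 * real n)) ^ 2) / 2 \<le> p" and "p \<le> 1"
  shows "(\<exists>\<mu>\<in>M1_ge p (complete_edges (Kverts n)).
            measure_pmf.prob \<mu> {F. largest_comp_size (Kverts n) F > n}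
              = 1 - real ((2 * n) choose n) * ((1 - p) / 2) ^ n)
       \<and> (\<forall>\<mu>\<in>M1_ge p (complete_edges (Kverts n)).
            measure_pmf.prob \<mu> {F. largest_comp_size (Kverts n) F > n}
              \<ge> 1 - real ((2 * n) choose n) * ((1 - p) / 2) ^ n)"
  using existence[OF assms] lower_bound by blast

end
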